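(* Let $R,S$ be finite nonempty sets, $k$ a positive integer, $p_r>0$ ($r\in R$), $T=\sum_{r\in R}p_r$, $d_{r,s}\ge0$, and $\kappa<0$. Let $F$ be the set of $(\mathbf x,\mathbf y)$ with $x_s,y_{r,s}\in\{0,1\}$, $\sum_{s\in S}x_s=k$, $y_{r,s}\le x_s$, and $\sum_{s\in S}y_{r,s}=1$ for all $r$. For $\mathbf y$ let $\overline{\mathcal K}(\mathbf y)=\sum_{r,s}p_ry_{r,s}e^{-\kappa d_{r,s}}$ and $\mathcal K(\mathbf y)=-\frac1\kappa\ln\left(\frac1T\overline{\mathcal K}(\mathbf y)\right)$. Let $U\subseteq S$, and suppose $c_s=c$ for all $s\in U$ with $c\ge 0$; let $\sigma(\mathbf x)=\sum_{s\in U}c_sx_s$. Let $\hat{\mathcal K}\in\mathbb R$ and let $(\mathbf x^*,\mathbf y^*,v^*,q^* )$ be optimal for \[ \text{(KPL}^p)\quad \min\ \overline{\mathcal K}(\mathbf y)+Te^{-\kappa\hat{\mathcal K}}(v-1)\ \text{ s.t. } (\mathbf x,\mathbf y)\in F,\ v\ge e^{q},\ q=-\kappa\,\sigma(\mathbf x), \] with $\sigma^*=\sigma(\mathbf x^* )$, $q^*=-\kappa\sigma^*$, $\mathcal K^*=\mathcal K(\mathbf y^* )$. Let $n=\min\{k,|U|\}$ and linearization points $\beta_i:=-\kappa c\, i$ for $i=0,1,\dots,n$, and $g(q)=\max_{0\le i\le n}\left(e^{\beta_i}+e^{\beta_i}(q-\beta_i)\right)$ (the tangent-line lower approximation of $e^q$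 used in the linearized model (KPL$^t$), in which $v\ge e^q$ is replaced by $v\ge e^{\beta_i}+e^{\beta_i}(q-\beta_i)$ for all $i$). Define $\hat\sigma$ and $\ddot\sigma$ by \[ \mathcal K^*+\hat\sigma=-\tfrac1\kappa\ln\left(\tfrac1T\left(\overline{\mathcal K}(\mathbf y^* )+Te^{-\kappa\hat{\mathcal K}}\left(e^{q^*}-1\right)\right)\right),\quad \mathcal K^*+\ddot\sigma=-\tfrac1\kappa\ln\left(\tfrac1T\left(\overline{\mathcal K}(\mathbf y^* )+Te^{-\kappa\hat{\mathcal K}}\left(g(q^* )-1\right)\right)\right). \] Then $\ddot\sigma=\hat\sigma$.
   Context: $\hat\sigma$ is the penalty applied to the optimal Kolm–Pollak score by the model with the exact exponential constraint, and $\ddot\sigma$ the penalty applied when the exponential is replaced by its lower-bounding tangent lines at the points $\beta_i$. *)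

theory Defs
  imports Complex_Main
begin

definition feasF :: "nat \<Rightarrow> 'r set \<Rightarrow> 's set \<Rightarrow> ('s \<Rightarrow> real) \<Rightarrow> ('r \<Rightarrow> 's \<Rightarrow> real) \<Rightarrow> bool" where
  "feasF k R S x y \<longleftrightarrow>
     (\<forall>s\<in>S. x s \<in> {0,1}) \<and> (\<forall>r\<in>R. \<forall>s\<in>S. y r s \<in> {0,1}) \<and>
     (\<Sum>s\<in>S. x s) = real k \<and>
     (\<forall>r\<in>R. \<forall>s\<in>S. y r s \<le> x s) \<and>
     (\<forall>r\<in>R. (\<Sum>s\<in>S. y r s) = 1)"

definition Kbar :: "'r set \<Rightarrow> 's set \<Rightarrow> ('r \<Rightarrow> real) \<Rightarrow> ('r \<Rightarrow> 's \<Rightarrow> real) \<Rightarrow> real \<Rightarrow> ('r \<Rightarrow> 's \<Rightarrow> real) \<Rightarrow> real" where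
  "Kbar R S p d \<kappa> y = (\<Sum>r\<in>R. \<Sum>s\<in>S. p r * y r s * exp (- \<kappa> * d r s))"

definition KP :: "'r set \<Rightarrow> 's set \<Rightarrow> ('r \<Rightarrow> real) \<Rightarrow> ('r \<Rightarrow> 's \<Rightarrow> real) \<Rightarrow> real \<Rightarrow> ('r \<Rightarrow> 's \<Rightarrow> real) \<Rightarrow> real" where
  "KP R S p d \<kappa> y = - (1 / \<kappa>) * ln ((1 / (\<Sum>r\<in>R. p r)) * Kbar R S p d \<kappa> y)"

definition sigma :: "'s set \<Rightarrow> ('s \<Rightarrow> real) \<Rightarrow> ('s \<Rightarrow> real) \<Rightarrow> real" where
  "sigma U c x = (\<Sum>s\<in>U. c s * x s)"

definition KPLp_feas :: "nat \<Rightarrow> 'r set \<Rightarrow> 's set \<Rightarrow> 's set \<Rightarrow> ('s \<Rightarrow> real) \<Rightarrow> real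
     \<Rightarrow> ('s \<Rightarrow> real) \<Rightarrow> ('r \<Rightarrow> 's \<Rightarrow> real) \<Rightarrow> real \<Rightarrow> real \<Rightarrow> bool" where
  "KPLp_feas k R S U c \<kappa> x y v q \<longleftrightarrow>
     feasF k R S x y \<and> v \<ge> exp q \<and> q = - \<kappa> * sigma U c x"

definition KPLp_obj :: "'r set \<Rightarrow> 's set \<Rightarrow> ('r \<Rightarrow> real) \<Rightarrow> ('r \<Rightarrow> 's \<Rightarrow> real) \<Rightarrow> real \<Rightarrow> real
     \<Rightarrow> ('r \<Rightarrow> 's \<Rightarrow> real) \<Rightarrow> real \<Rightarrow> real" where
  "KPLp_obj R S p d \<kappa> Khat y v =
     Kbar R S p d \<kappa> y + (\<Sum>r\<in>R. p r) * exp (- \<kappa> * Khat) * (v - 1)"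

definition beta :: "real \<Rightarrow> real \<Rightarrow> nat \<Rightarrow> real" where
  "beta \<kappa> c i = - \<kappa> * c * real i"

definition gtan :: "real \<Rightarrow> real \<Rightarrow> nat \<Rightarrow> real \<Rightarrow> real" where
  "gtan \<kappa> c n q = Max ((\<lambda>i. exp (beta \<kappa> c i) + exp (beta \<kappa> c i) * (q - beta \<kappa> c i)) ` {0..n})"

end

theory Submission
  imports Defs
begin

theorem proposition3:
  fixes R :: "'r set" and S :: "'s set" and k :: nat
    and p :: "'r \<Rightarrow> real" and d :: "'r \<Rightarrow> 's \<Rightarrow> real" and \<kappa> :: real
    and U :: "'s set" and cs :: "'s \<Rightarrow> real" and c :: real and Khat :: real
    and xs :: "'s \<Rightarrow> real" and ys :: "'r \<Rightarrow> 's \<Rightarrow> real" and vs qs :: real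
    and sigma_hat sigma_ddot :: real
  assumes "finite R" "R \<noteq> {}" "finite S" "S \<noteq> {}" "k > 0"
    and "\<forall>r\<in>R. p r > 0"
    and "\<forall>r\<in>R. \<forall>s\<in>S. d r s \<ge> 0"
    and "\<kappa> < 0"
    and "U \<subseteq> S" and "\<forall>s\<in>U. cs s = c" and "c \<ge> 0"
    and opt_feas: "KPLp_feas k R S U cs \<kappa> xs ys vs qs"
    and opt_min: "\<forall>x y v q. KPLp_feas k R S U cs \<kappa> x y v q \<longrightarrow>
                    KPLp_obj R S p d \<kappa> Khat ys vs \<le> KPLp_obj R S p d \<kappa> Khat y v"
    and hat: "KP R S p d \<kappa> ys + sigma_hat =
       - (1 / \<kappa>) * ln ((1 / (\<Sum>r\<in>R. p r)) *
          (Kbar R S p d \<kappa> ys + (\<Sum>r\<in>R. p r) * exp (- \<kappa> * Khat) * (exp qs - 1)))"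
    and ddot: "KP R S p d \<kappa> ys + sigma_ddot =
       - (1 / \<kappa>) * ln ((1 / (\<Sum>r\<in>R. p r)) *
          (Kbar R S p d \<kappa> ys + (\<Sum>r\<in>R. p r) * exp (- \<kappa> * Khat) *
             (gtan \<kappa> c (min k (card U)) qs - 1)))"
  shows "sigma_ddot = sigma_hat"
proof -
  have finU: "finite U" using assms(3,9) finite_subset by blast
  have fe: "feasF k R S xs ys" and qdef: "qs = - \<kappa> * sigma U cs xs"
    using opt_feas unfolding KPLp_feas_def by auto
  have x01: "\<forall>s\<in>S. xs s \<in> {0,1}" and sumk: "(\<Sum>s\<in>S. xs s) = real k"
    using fe unfolding feasF_def by auto
  define m where "m = card {s\<in>U. xs s = 1}"
  have sU: "(\<Sum>s\<in>U. xs s) = real m"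
  proof -
    have "(\<Sum>s\<in>U. xs s) = (\<Sum>s\<in>U. if xs s = 1 then 1 else 0)"
      using x01 assms(9) by (intro sum.cong) auto
    also have "\<dots> = real m"
    proof -
      have e: "U \<inter> {s. xs s = 1} = {s\<in>U. xs s = 1}" by blast
      show ?thesis unfolding m_def using finU by (simp add: sum.If_cases e)
    qed
    finally show ?thesis .
  qed
  have m1: "m \<le> card U" unfolding m_def using finU by (intro card_mono) auto
  have "real m \<le> real k"
  proof -
    have "(\<Sum>s\<in>U. xs s) \<le> (\<Sum>s\<in>S. xs s)"
      using x01 assms(3,9) by (intro sum_mono2) auto
    thus ?thesis using sU sumk by simp
  qed
  hence m2: "m \<le> k" by simp
  have qsb: "qs = beta \<kappa> c m"
  proof -
    have "sigma U cs xs = c * (\<Sum>s\<in>U. xs s)"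
      unfolding sigma_def using assms(10) by (simp add: sum_distrib_left)
    thus ?thesis using qdef sU unfolding beta_def by simp
  qed
  have tang: "exp b + exp b * (q - b) \<le> exp q" for b q :: real
  proof -
    have "exp b + exp b * (q - b) = exp b * (1 + (q - b))" by algebra
    also have "\<dots> \<le> exp b * exp (q - b)"
      by (intro mult_left_mono exp_ge_add_one_self) simp
    also have "\<dots> = exp q" by (simp add: exp_diff)
    finally show ?thesis .
  qed
  have g: "gtan \<kappa> c (min k (card U)) qs = exp qs"
    unfolding gtan_def
  proof (rule antisym)
    show "Max ((\<lambda>i. exp (beta \<kappa> c i) + exp (beta \<kappa> c i) * (qs - beta \<kappa> c i)) ` {0..min k (card U)}) \<le> exp qs"
      using tang by (subst Max_le_iff) auto
    have "m \<in> {0..min k (card U)}" using m1 m2 by simp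
    hence "exp (beta \<kappa> c m) + exp (beta \<kappa> c m) * (qs - beta \<kappa> c m)
        \<le> Max ((\<lambda>i. exp (beta \<kappa> c i) + exp (beta \<kappa> c i) * (qs - beta \<kappa> c i)) ` {0..min k (card U)})"
      by (intro Max_ge) auto
    thus "exp qs \<le> Max ((\<lambda>i. exp (beta \<kappa> c i) + exp (beta \<kappa> c i) * (qs - beta \<kappa> c i)) ` {0..min k (card U)})"
      using qsb by simp
  qed
  show ?thesis using hat ddot g by simp
qed

end
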